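(* For $\lambda>0$ let $\tilde P_1(\lambda)$ be a random variable on $(0,1)$ with density $$\frac{\lambda}{\sqrt{2\pi}}\,p^{-1/2}(1-p)^{-3/2}\exp\Big(-\frac{\lambda^2}{2}\frac{p}{1-p}\Big),\quad 0<p<1,$$ and let $\mu(q\,\|\,\lambda)=\mathbb E[\tilde P_1(\lambda)^q]$. Then for each $\lambda>0$ and $q>-\tfrac12$, $$\mu(q\,\|\,\lambda)=\mathbb E\Big[\Big(\frac{B_1^2}{\lambda^2+B_1^2}\Big)^q\Big]=\mathbb E(|B_1|^{2q})\,h_{-2q}(\lambda),$$ where $B_1$ is standard Gaussian, $\mathbb E(|B_1|^{2q})=2^q\Gamma(q+\tfrac12)/\Gamma(\tfrac12)$, and $h_{-2q}$ is the Hermite function. Moreover, for $q>0$, $$\mu(q\,\|\,\lambda)=\mathbb E\big[\exp(-\lambda\sqrt{2\Gamma_q})\big],$$ where $\Gamma_q$ has the gamma density $\Gamma(q)^{-1}t^{q-1}e^{-t}$ on $t>0$.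
   Context: The density above is the structural density (law of the frequency of the class containing 1) of the random partition generated by uniform sampling from the excursion intervals of a standard Brownian motion on $[0,1]$ conditioned on its local time at $0$ up to time $1$ being $\lambda$. Hermite function: $h_0(\lambda)=1$, and for $q\notin\{0,1,2,\dots\}$, $$h_{-2q}(\lambda)=\frac{1}{2\Gamma(2q)}\sum_{j=0}^\infty\Gamma\big(q+\tfrac j2\big)2^{q+j/2}\frac{(-\lambda)^j}{j!}.$$ *)

theory Defs
  imports "HOL-Probability.Probability"
begin

definition P1_density :: "real \<Rightarrow> real \<Rightarrow> real" where
  "P1_density lam p =
     lam / sqrt (2 * pi) * p powr (-1/2) * (1 - p) powr (-3/2)
       * exp (- (lam^2 / 2) * (p / (1 - p)))"

definition mu_moment :: "real \<Rightarrow> real \<Rightarrow> real" where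
  "mu_moment q lam = (LINT p:{0<..<1}|lborel. p powr q * P1_density lam p)"

definition hermite_fun :: "real \<Rightarrow> real \<Rightarrow> real" where
  "hermite_fun nu lam =
     (if nu = 0 then 1
      else (let q = - nu / 2 in
        1 / (2 * Gamma (2 * q)) *
        (\<Sum>j. Gamma (q + real j / 2) * 2 powr (q + real j / 2) * (- lam) ^ j / fact j)))"

end

theory Submission
  imports Defs
begin

lemma gamma_nn:
  fixes s b :: real
  assumes s: "s > 0" and b: "b > 0"
  shows "(\<integral>\<^sup>+t. ennreal (t powr (s-1) * exp (-(b*t))) * indicator {0<..} t \<partial>lborel)
     = ennreal (b powr (-s) * Gamma s)"
proof -
  define G where "G = (\<lambda>x::real. ennreal (x powr (s-1) / exp x) * indicator {0<..} x)"
  have G: "(\<integral>\<^sup>+x. G x \<partial>lborel) = ennreal (Gamma s)"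
  proof -
    have "(\<integral>\<^sup>+x. ennreal (x powr (s-1) / exp x) * indicator {0..} x \<partial>lborel) = ennreal (Gamma s)"
      by (rule nn_integral_has_integral_lebesgue'[OF _ Gamma_integral_real[OF s]]) auto
    moreover have "(\<lambda>x. ennreal (x powr (s-1) / exp x) * indicator {0..} x) = G"
      by (auto simp: G_def indicator_def fun_eq_iff)
    ultimately show ?thesis by simp
  qed
  have "(\<integral>\<^sup>+x. G x \<partial>lborel) = ennreal \<bar>b\<bar> * (\<integral>\<^sup>+x. G (0 + b * x) \<partial>lborel)"
    using b by (intro nn_integral_real_affine) (auto simp: G_def)
  also have "(\<lambda>x. G (0 + b * x)) = (\<lambda>x. ennreal (b powr (s-1)) * (ennreal (x powr (s-1) * exp (-(b*x))) * indicator {0<..} x))"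
  proof (rule ext)
    fix x :: real
    show "G (0 + b * x) = ennreal (b powr (s-1)) * (ennreal (x powr (s-1) * exp (-(b*x))) * indicator {0<..} x)"
    proof (cases "x > 0")
      case True
      have "(b*x) powr (s-1) / exp (b*x) = b powr (s-1) * (x powr (s-1) * exp (-(b*x)))"
        using b True by (simp add: powr_mult exp_minus field_simps)
      then show ?thesis using b True by (simp add: G_def ennreal_mult')
    next
      case False
      then show ?thesis using b by (simp add: G_def indicator_def zero_less_mult_iff)
    qed
  qed
  also have "(\<integral>\<^sup>+x. ennreal (b powr (s-1)) * (ennreal (x powr (s-1) * exp (-(b*x))) * indicator {0<..} x) \<partial>lborel)
      = ennreal (b powr (s-1)) * (\<integral>\<^sup>+t. ennreal (t powr (s-1) * exp (-(b*t))) * indicator {0<..} t \<partial>lborel)"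
    by (rule nn_integral_cmult) auto
  finally have eq: "ennreal (Gamma s) = ennreal (b * b powr (s-1)) * (\<integral>\<^sup>+t. ennreal (t powr (s-1) * exp (-(b*t))) * indicator {0<..} t \<partial>lborel)"
    using G b by (simp add: ennreal_mult' mult.assoc)
  have bb: "b * b powr (s-1) = b powr s" using b by (simp add: powr_diff field_simps)
  have "ennreal (b powr (-s)) * ennreal (Gamma s) = (\<integral>\<^sup>+t. ennreal (t powr (s-1) * exp (-(b*t))) * indicator {0<..} t \<partial>lborel)"
    unfolding eq bb using b
    by (simp add: mult.assoc[symmetric] ennreal_mult'[symmetric] powr_minus) 
  then show ?thesis using b by (simp add: ennreal_mult')
qed

lemma nn_fin_abs_int:
  fixes f :: "real \<Rightarrow> real"
  assumes T: "T \<in> sets borel" and fm: "f \<in> borel_measurable borel"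
    and fnn: "\<And>y. y \<in> T \<Longrightarrow> 0 \<le> f y"
    and fin: "(\<integral>\<^sup>+x. ennreal (f x) * indicator T x \<partial>lborel) < \<infinity>"
  shows "f absolutely_integrable_on T"
proof -
  have m: "(\<lambda>x. indicator T x *\<^sub>R f x) \<in> borel_measurable lborel" using T fm by simp
  have "(\<integral>\<^sup>+x. ennreal (indicator T x *\<^sub>R f x) \<partial>lborel) = (\<integral>\<^sup>+x. ennreal (f x) * indicator T x \<partial>lborel)"
    by (intro nn_integral_cong) (auto simp: indicator_def)
  then have "integrable lborel (\<lambda>x. indicator T x *\<^sub>R f x)"
    using fin fnn by (intro integrableI_nonneg[OF m]) (auto simp: indicator_def)
  then have "integrable lebesgue (\<lambda>x. indicator T x *\<^sub>R f x)"
    using integrable_completion[OF m] by simp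
  then show ?thesis by (simp add: set_integrable_def)
qed

lemma nn_subst:
  fixes f g g' :: "real \<Rightarrow> real" and S T :: "real set"
  assumes S: "S \<in> sets borel" and T: "T \<in> sets borel"
  and der: "\<And>x. x \<in> S \<Longrightarrow> (g has_real_derivative g' x) (at x)"
  and inj: "inj_on g S" and img: "g ` S = T"
  and fnn: "\<And>y. y \<in> T \<Longrightarrow> 0 \<le> f y"
  and fm: "f \<in> borel_measurable borel"
  and hm: "(\<lambda>x. \<bar>g' x\<bar> * f (g x)) \<in> borel_measurable borel"
  shows "(\<integral>\<^sup>+x. ennreal (f x) * indicator T x \<partial>lborel) = (\<integral>\<^sup>+x. ennreal (\<bar>g' x\<bar> * f (g x)) * indicator S x \<partial>lborel)"
proof -
  define h where "h = (\<lambda>x. \<bar>g' x\<bar> * f (g x))"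
  have hnn: "\<And>x. x \<in> S \<Longrightarrow> 0 \<le> h x" using fnn img by (auto simp: h_def)
  have Sl: "S \<in> sets lebesgue" using S by simp
  have iff: "h absolutely_integrable_on S \<and> integral S h = b \<longleftrightarrow> f absolutely_integrable_on T \<and> integral T f = b" for b
    unfolding h_def img[symmetric]
    by (rule has_absolute_integral_change_of_variables_1'[OF Sl])
       (use der inj in \<open>auto intro: has_field_derivative_at_within\<close>)
  show ?thesis
  proof (cases "f absolutely_integrable_on T")
    case True
    with iff[of "integral T f"] have h: "h absolutely_integrable_on S" "integral S h = integral T f" by auto
    have "(f has_integral integral T f) T"
      using True set_lebesgue_integral_eq_integral(1) by (metis integrable_integral)
    then have 1: "(\<integral>\<^sup>+x. ennreal (f x) * indicator T x \<partial>lborel) = ennreal (integral T f)"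
      by (rule nn_integral_has_integral_lebesgue'[rotated]) (use fnn in auto)
    have "(h has_integral integral T f) S"
      using h set_lebesgue_integral_eq_integral(1) by (metis integrable_integral)
    then have 2: "(\<integral>\<^sup>+x. ennreal (h x) * indicator S x \<partial>lborel) = ennreal (integral T f)"
      by (rule nn_integral_has_integral_lebesgue'[rotated]) (use hnn in auto)
    show ?thesis using 1 2 by (simp add: h_def)
  next
    case False
    with iff[of "integral S h"] have nh: "\<not> h absolutely_integrable_on S" by auto
    have 1: "(\<integral>\<^sup>+x. ennreal (f x) * indicator T x \<partial>lborel) = \<infinity>"
    proof (rule ccontr)
      assume "\<not> ?thesis"
      then have "(\<integral>\<^sup>+x. ennreal (f x) * indicator T x \<partial>lborel) < \<infinity>" by (simp add: less_top)
      then have "f absolutely_integrable_on T" using nn_fin_abs_int[OF T fm fnn] by simp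
      with False show False by simp
    qed
    have "h \<in> borel_measurable borel" using hm by (simp add: h_def)
    have 2: "(\<integral>\<^sup>+x. ennreal (h x) * indicator S x \<partial>lborel) = \<infinity>"
    proof (rule ccontr)
      assume "\<not> ?thesis"
      then have "(\<integral>\<^sup>+x. ennreal (h x) * indicator S x \<partial>lborel) < \<infinity>" by (simp add: less_top)
      then have "h absolutely_integrable_on S" using nn_fin_abs_int[OF S \<open>h \<in> borel_measurable borel\<close> hnn] by simp
      with nh show False by simp
    qed
    show ?thesis using 1 2 by (simp add: h_def)
  qed
qed

lemma nn_even:
  fixes f :: "real \<Rightarrow> real"
  assumes fm[measurable]: "f \<in> borel_measurable borel" and ev: "\<And>x. f (-x) = f x"
  shows "(\<integral>\<^sup>+x. ennreal (f x) \<partial>lborel) = 2 * (\<integral>\<^sup>+x. ennreal (f x) * indicator {0<..} x \<partial>lborel)"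
proof -
  have "(\<integral>\<^sup>+x. ennreal (f x) \<partial>lborel) = (\<integral>\<^sup>+x. ennreal (f x) * indicator {..<0} x + ennreal (f x) * indicator {0<..} x \<partial>lborel)"
    by (intro nn_integral_cong_AE) (use AE_lborel_singleton[of 0] in \<open>eventually_elim, auto simp: indicator_def\<close>)
  also have "\<dots> = (\<integral>\<^sup>+x. ennreal (f x) * indicator {..<0} x \<partial>lborel) + (\<integral>\<^sup>+x. ennreal (f x) * indicator {0<..} x \<partial>lborel)"
    by (rule nn_integral_add) auto
  also have "(\<integral>\<^sup>+x. ennreal (f x) * indicator {..<0} x \<partial>lborel) = ennreal \<bar>-1\<bar> * (\<integral>\<^sup>+x. ennreal (f (0 + (-1) * x)) * indicator {..<0} (0 + (-1) * x) \<partial>lborel)"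
    by (rule nn_integral_real_affine) auto
  also have "(\<lambda>x. ennreal (f (0 + (-1) * x)) * indicator {..<0::real} (0 + (-1) * x)) = (\<lambda>x. ennreal (f x) * indicator {0<..} x)"
    by (auto simp: ev indicator_def fun_eq_iff)
  finally show ?thesis by (simp add: mult_2)
qed

lemma nn_std_normal: "(\<integral>\<^sup>+x. ennreal (std_normal_density x) \<partial>lborel) = 1"
  using nn_integral_eq_integrable[of std_normal_density lborel 1] by simp

lemma K_int:
  fixes lam t :: real
  assumes lam: "lam > 0" and t: "t > 0"
  shows "(\<integral>\<^sup>+x. ennreal ((1 + lam\<^sup>2/x\<^sup>2) * exp (-(t*lam\<^sup>2/x\<^sup>2)) * std_normal_density x) \<partial>lborel)
       = ennreal (exp (-(lam* sqrt(2*t))) * (1 + lam / sqrt (2*t)))"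
proof -
  define \<beta> where "\<beta> = lam * sqrt (2*t)"
  have b: "\<beta> > 0" using lam t by (simp add: \<beta>_def)
  have b2: "\<beta>\<^sup>2 = 2*t*lam\<^sup>2" using t by (simp add: \<beta>_def power_mult_distrib)
  define E where "E = (\<lambda>x::real. exp (-(x\<^sup>2/2) - \<beta>\<^sup>2/(2*x\<^sup>2)) / sqrt (2*pi))"
  have Enn: "0 \<le> E x" for x by (simp add: E_def)
  have Em[measurable]: "E \<in> borel_measurable borel" unfolding E_def by measurable
  define A where "A = (\<integral>\<^sup>+x. ennreal (E x) * indicator {0<..} x \<partial>lborel)"
  define B where "B = (\<integral>\<^sup>+x. ennreal (\<beta>/x\<^sup>2 * E x) * indicator {0<..} x \<partial>lborel)"
  have AB: "A = B"
  proof -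
    have "A = (\<integral>\<^sup>+x. ennreal (\<bar>-(\<beta>/x\<^sup>2)\<bar> * E (\<beta>/x)) * indicator {0<..} x \<partial>lborel)"
      unfolding A_def
    proof (rule nn_subst)
      show "(\<lambda>x. \<beta> / x) ` {0<..} = {0<..}"
      proof
        show "(\<lambda>x. \<beta> / x) ` {0<..} \<subseteq> {0<..}" using b by auto
        show "{0<..} \<subseteq> (\<lambda>x. \<beta> / x) ` {0<..}"
        proof
          fix y :: real assume "y \<in> {0<..}"
          then show "y \<in> (\<lambda>x. \<beta> / x) ` {0<..}" using b by (intro image_eqI[of _ _ "\<beta>/y"]) auto
        qed
      qed
      show "inj_on (\<lambda>x. \<beta> / x) {0<..}" using b by (auto simp: inj_on_def field_simps)
      show "((\<lambda>x. \<beta> / x) has_real_derivative - (\<beta> / x\<^sup>2)) (at x)" if "x \<in> {0<..}" for x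
        using that by (auto intro!: derivative_eq_intros simp: power2_eq_square field_simps)
    qed (use Enn in auto)
    also have "\<dots> = B" unfolding B_def
    proof (intro nn_integral_cong)
      fix x :: real
      show "ennreal (\<bar>-(\<beta>/x\<^sup>2)\<bar> * E (\<beta>/x)) * indicator {0<..} x = ennreal (\<beta>/x\<^sup>2 * E x) * indicator {0<..} x"
      proof (cases "x > 0")
        case True
        have "E (\<beta>/x) = E x" unfolding E_def using True b
          by (simp add: power_divide field_simps)
        then show ?thesis using True b by simp
      qed simp
    qed
    finally show ?thesis .
  qed
  have ApB: "A + B = ennreal (exp (-\<beta>))"
  proof -
    have "ennreal (exp (-\<beta>)) = (\<integral>\<^sup>+y. ennreal (exp (-\<beta>) * std_normal_density y) * indicator UNIV y \<partial>lborel)"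
      using nn_integral_cmult[of "\<lambda>y. ennreal (std_normal_density y)" lborel "ennreal (exp (-\<beta>))"]
      by (simp add: nn_std_normal ennreal_mult')
    also have "\<dots> = (\<integral>\<^sup>+x. ennreal (\<bar>1 + \<beta>/x\<^sup>2\<bar> * (exp (-\<beta>) * std_normal_density (x - \<beta>/x))) * indicator {0<..} x \<partial>lborel)"
    proof (rule nn_subst)
      show "(\<lambda>x. x - \<beta> / x) ` {0<..} = UNIV"
      proof -
        { fix y :: real
          define r where "r = sqrt (y\<^sup>2 + 4*\<beta>)"
          have r2: "r\<^sup>2 = y\<^sup>2 + 4*\<beta>" using b by (simp add: r_def)
          have ry: "r > \<bar>y\<bar>" unfolding r_def using b by (intro real_less_rsqrt) (simp add: power2_abs)
          define x where "x = (y + r) / 2"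
          have x: "x > 0" using ry by (simp add: x_def)
          have "x * x - \<beta> = y * x" using r2 unfolding x_def by (simp add: power2_eq_square field_simps)
          then have "x - \<beta> / x = y" using x by (simp add: field_simps)
          then have "y \<in> (\<lambda>x. x - \<beta> / x) ` {0<..}" using x by (intro image_eqI[of _ _ x]) auto }
        then show ?thesis by auto
      qed
      have "strict_mono_on {0<..} (\<lambda>x. x - \<beta> / x)"
      proof (rule strict_mono_onI)
        fix x y :: real assume "x \<in> {0<..}" "y \<in> {0<..}" "x < y"
        then have "\<beta> / y < \<beta> / x" using b by (intro divide_strict_left_mono) auto
        then show "x - \<beta> / x < y - \<beta> / y" using \<open>x < y\<close> by simp
      qed
      then show "inj_on (\<lambda>x. x - \<beta> / x) {0<..}" by (rule strict_mono_on_imp_inj_on)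
      show "((\<lambda>x. x - \<beta> / x) has_real_derivative 1 + \<beta>/x\<^sup>2) (at x)" if "x \<in> {0<..}" for x
        using that by (auto intro!: derivative_eq_intros simp: power2_eq_square field_simps)
    qed auto
    also have "\<dots> = (\<integral>\<^sup>+x. ennreal (E x) * indicator {0<..} x + ennreal (\<beta>/x\<^sup>2 * E x) * indicator {0<..} x \<partial>lborel)"
    proof (intro nn_integral_cong)
      fix x :: real
      show "ennreal (\<bar>1 + \<beta>/x\<^sup>2\<bar> * (exp (-\<beta>) * std_normal_density (x - \<beta>/x))) * indicator {0<..} x
          = ennreal (E x) * indicator {0<..} x + ennreal (\<beta>/x\<^sup>2 * E x) * indicator {0<..} x"
      proof (cases "x > 0")
        case True
        have "exp (-\<beta>) * exp (- (x - \<beta>/x)\<^sup>2 / 2) = exp (-(x\<^sup>2/2) - \<beta>\<^sup>2/(2*x\<^sup>2))"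
          unfolding exp_add[symmetric] using True by (simp add: power2_eq_square field_simps)
        then have "exp (-\<beta>) * std_normal_density (x - \<beta>/x) = E x"
          by (simp add: E_def std_normal_density_def)
        moreover have "\<bar>1 + \<beta>/x\<^sup>2\<bar> = 1 + \<beta>/x\<^sup>2" using b True by simp
        ultimately show ?thesis using True b Enn[of x]
          by (simp add: distrib_right ennreal_plus[symmetric] del: ennreal_plus)
      qed simp
    qed
    also have "\<dots> = A + B" unfolding A_def B_def by (rule nn_integral_add) auto
    finally show ?thesis ..
  qed
  have Aval: "A = ennreal (exp (-\<beta>) / 2)"
  proof -
    have AA: "A + A = ennreal (exp (-\<beta>))" using ApB AB by simp
    then have "A \<noteq> \<top>" by (auto simp: ennreal_add_eq_top)
    then obtain a where a: "A = ennreal a" "0 \<le> a" by (cases A rule: ennreal_cases) auto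
    have e: "ennreal (a + a) = ennreal (exp (-\<beta>))" using AA a by (metis ennreal_plus)
    have "a + a = exp (-\<beta>)" by (rule ennreal_inj[THEN iffD1, OF _ _ e]) (use a in auto)
    then show ?thesis using a by simp
  qed
  have "(\<integral>\<^sup>+x. ennreal ((1 + lam\<^sup>2/x\<^sup>2) * exp (-(t*lam\<^sup>2/x\<^sup>2)) * std_normal_density x) \<partial>lborel)
      = 2 * (\<integral>\<^sup>+x. ennreal ((1 + lam\<^sup>2/x\<^sup>2) * exp (-(t*lam\<^sup>2/x\<^sup>2)) * std_normal_density x) * indicator {0<..} x \<partial>lborel)"
    by (rule nn_even) (auto simp: power2_eq_square std_normal_density_def)
  also have "(\<integral>\<^sup>+x. ennreal ((1 + lam\<^sup>2/x\<^sup>2) * exp (-(t*lam\<^sup>2/x\<^sup>2)) * std_normal_density x) * indicator {0<..} x \<partial>lborel)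
      = (\<integral>\<^sup>+x. ennreal (E x) * indicator {0<..} x + ennreal (lam\<^sup>2/\<beta>) * (ennreal (\<beta>/x\<^sup>2 * E x) * indicator {0<..} x) \<partial>lborel)"
  proof (intro nn_integral_cong)
    fix x :: real
    show "ennreal ((1 + lam\<^sup>2/x\<^sup>2) * exp (-(t*lam\<^sup>2/x\<^sup>2)) * std_normal_density x) * indicator {0<..} x
      = ennreal (E x) * indicator {0<..} x + ennreal (lam\<^sup>2/\<beta>) * (ennreal (\<beta>/x\<^sup>2 * E x) * indicator {0<..} x)"
    proof (cases "x > 0")
      case True
      have "exp (-(t*lam\<^sup>2/x\<^sup>2)) * std_normal_density x = E x"
        unfolding E_def std_normal_density_def b2 using True
        by (simp add: exp_add[symmetric] field_simps)
      then have "(1 + lam\<^sup>2/x\<^sup>2) * exp (-(t*lam\<^sup>2/x\<^sup>2)) * std_normal_density x = (1 + lam\<^sup>2/x\<^sup>2) * E x"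
        by (simp add: mult.assoc)
      also have "\<dots> = E x + lam\<^sup>2/\<beta> * (\<beta>/x\<^sup>2 * E x)"
        using b True by (simp add: field_simps)
      finally have "(1 + lam\<^sup>2/x\<^sup>2) * exp (-(t*lam\<^sup>2/x\<^sup>2)) * std_normal_density x = E x + lam\<^sup>2/\<beta> * (\<beta>/x\<^sup>2 * E x)" .
      then show ?thesis using True b Enn[of x]
        by (simp add: ennreal_mult'[symmetric] ennreal_plus[symmetric] del: ennreal_plus)
    qed simp
  qed
  also have "\<dots> = A + ennreal (lam\<^sup>2/\<beta>) * B"
    unfolding A_def B_def
    by (subst nn_integral_add) (auto simp: nn_integral_cmult)
  also have "2 * (A + ennreal (lam\<^sup>2/\<beta>) * B) = ennreal (exp (-\<beta>) * (1 + lam\<^sup>2/\<beta>))"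
    unfolding AB[symmetric] Aval using b
    by (simp add: ennreal_mult'[symmetric] ennreal_plus[symmetric] ennreal_numeral[symmetric] field_simps del: ennreal_plus ennreal_numeral)
  also have "lam\<^sup>2/\<beta> = lam / sqrt (2*t)" using lam t by (simp add: \<beta>_def power2_eq_square)
  finally show ?thesis by (simp add: \<beta>_def)
qed

lemma set_nn_to_int:
  fixes f :: "real \<Rightarrow> real"
  assumes fm: "f \<in> borel_measurable borel" and A: "A \<in> sets borel"
    and nn: "\<And>x. x \<in> A \<Longrightarrow> 0 \<le> f x" and r: "0 \<le> r"
    and eq: "(\<integral>\<^sup>+x. ennreal (f x) * indicator A x \<partial>lborel) = ennreal r"
  shows "set_integrable lborel A f \<and> (LINT x:A|lborel. f x) = r"
proof -
  have m: "(\<lambda>x. indicator A x *\<^sub>R f x) \<in> borel_measurable lborel" using fm A by simp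
  have "(\<integral>\<^sup>+x. ennreal (indicator A x *\<^sub>R f x) \<partial>lborel) = ennreal r"
    using eq by (subst nn_integral_cong[where v="\<lambda>x. ennreal (f x) * indicator A x"]) (auto simp: indicator_def)
  then have "integrable lborel (\<lambda>x. indicator A x *\<^sub>R f x) \<and> integral\<^sup>L lborel (\<lambda>x. indicator A x *\<^sub>R f x) = r"
    using nn_integral_eq_integrable[OF m _ r] nn by (auto simp: indicator_def)
  then show ?thesis by (simp add: set_integrable_def set_lebesgue_integral_def)
qed

lemma gamma_int:
  fixes s :: real assumes s: "s > 0"
  shows "set_integrable lborel {0<..} (\<lambda>t. t powr (s-1) * exp (-t)) \<and> (LINT t:{0<..}|lborel. t powr (s-1) * exp (-t)) = Gamma s"
  using gamma_nn[OF s zero_less_one] s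
  by (intro set_nn_to_int) (auto simp: Gamma_real_pos less_imp_le)

lemma sqrt_pow_powr:
  fixes t :: real assumes "t > 0"
  shows "sqrt (2*t) ^ j = 2 powr (real j / 2) * t powr (real j / 2)"
proof -
  have "sqrt (2*t) = (2*t) powr (1/2)" using assms by (simp add: powr_half_sqrt)
  then have "sqrt (2*t) ^ j = (2*t) powr (real j * (1/2))" using assms by (simp add: powr_power)
  then show ?thesis using assms by (simp add: powr_mult)
qed

lemma series_int:
  fixes lam s :: real
  assumes lam: "lam \<ge> 0" and s: "s > 0"
  shows "set_integrable lborel {0<..} (\<lambda>t. t powr (s-1) * exp (-t) * exp (-(lam * sqrt (2*t))))
     \<and> (\<lambda>j. Gamma (s + real j / 2) * ((-lam)^j * 2 powr (real j / 2) / fact j)) sums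
         (LINT t:{0<..}|lborel. t powr (s-1) * exp (-t) * exp (-(lam * sqrt (2*t))))"
proof -
  define c where "c = (\<lambda>j::nat. (-lam)^j * 2 powr (real j / 2) / fact j)"
  define f where "f = (\<lambda>j t. indicator {0<..} t * (c j * (t powr (s + real j / 2 - 1) * exp (-t))))"
  have sj: "s + real j / 2 > 0" for j using s by (simp add: add_pos_nonneg)
  have gi: "integrable lborel (\<lambda>t. indicator {0<..} t * (t powr (s + real j / 2 - 1) * exp (-t)))"
    "(\<integral>t. indicator {0<..} t * (t powr (s + real j / 2 - 1) * exp (-t)) \<partial>lborel) = Gamma (s + real j / 2)" for j
    using gamma_int[OF sj[of j]] unfolding set_integrable_def set_lebesgue_integral_def by auto
  have fint: "integrable lborel (f j) \<and> integral\<^sup>L lborel (f j) = c j * Gamma (s + real j / 2)" for j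
  proof -
    have "f j = (\<lambda>t. c j * (indicator {0<..} t * (t powr (s + real j / 2 - 1) * exp (-t))))"
      by (auto simp: f_def fun_eq_iff)
    then show ?thesis using gi[of j] by simp
  qed
  have nfint: "integrable lborel (\<lambda>t. norm (f j t)) \<and> (\<integral>t. norm (f j t) \<partial>lborel) = \<bar>c j\<bar> * Gamma (s + real j / 2)" for j
  proof -
    have "(\<lambda>t. norm (f j t)) = (\<lambda>t. \<bar>c j\<bar> * (indicator {0<..} t * (t powr (s + real j / 2 - 1) * exp (-t))))"
      by (auto simp: f_def fun_eq_iff indicator_def abs_mult)
    then show ?thesis using gi[of j] by simp
  qed
  have ptw: "(\<lambda>j. f j t) sums (indicator {0<..} t * (t powr (s-1) * exp (-t) * exp (-(lam * sqrt (2*t)))))"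
    and nptw: "(\<lambda>j. norm (f j t)) sums (indicator {0<..} t * (t powr (s-1) * exp (-t) * exp (lam * sqrt (2*t))))" for t
  proof -
    have "(\<lambda>j. f j t) sums (indicator {0<..} t * (t powr (s-1) * exp (-t) * exp (-(lam * sqrt (2*t))))) \<and>
       (\<lambda>j. norm (f j t)) sums (indicator {0<..} t * (t powr (s-1) * exp (-t) * exp (lam * sqrt (2*t))))"
    proof (cases "t > 0")
      case True
      have pa: "t powr (s + real j / 2 - 1) = t powr (s-1) * t powr (real j / 2)" for j
      proof -
        have "s + real j / 2 - 1 = (s - 1) + real j / 2" by simp
        then show ?thesis by (simp only: powr_add)
      qed
      have pb: "(-(lam * sqrt (2*t)))^j = (-lam)^j * (2 powr (real j / 2) * t powr (real j / 2))" for j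
      proof -
        have "(-(lam * sqrt (2*t)))^j = ((-lam) * sqrt (2*t))^j" by simp
        also have "\<dots> = (-lam)^j * sqrt (2*t)^j" by (rule power_mult_distrib)
        finally show ?thesis using sqrt_pow_powr[OF True] by simp
      qed
      have pc: "(lam * sqrt (2*t))^j = lam^j * (2 powr (real j / 2) * t powr (real j / 2))" for j
        using sqrt_pow_powr[OF True] by (simp add: power_mult_distrib)
      have e1: "f j t = (t powr (s-1) * exp (-t)) * ((-(lam * sqrt (2*t)))^j /\<^sub>R fact j)" for j
        using True unfolding pb f_def pa c_def by (simp add: field_simps)
      have e2: "norm (f j t) = (t powr (s-1) * exp (-t)) * ((lam * sqrt (2*t))^j /\<^sub>R fact j)" for j
        using True lam unfolding pc f_def pa c_def by (simp add: field_simps abs_mult power_abs)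
      have A: "(\<lambda>j. f j t) sums (indicator {0<..} t * (t powr (s-1) * exp (-t) * exp (-(lam * sqrt (2*t)))))"
        unfolding e1 using sums_mult[OF exp_converges[of "-(lam * sqrt (2*t))"], of "t powr (s-1) * exp (-t)"] True
        by simp
      have B: "(\<lambda>j. norm (f j t)) sums (indicator {0<..} t * (t powr (s-1) * exp (-t) * exp (lam * sqrt (2*t))))"
        unfolding e2 using sums_mult[OF exp_converges[of "lam * sqrt (2*t)"], of "t powr (s-1) * exp (-t)"] True
        by simp
      show ?thesis using A B by simp
    next
      case False
      then show ?thesis by (simp add: f_def)
    qed
    then show "(\<lambda>j. f j t) sums (indicator {0<..} t * (t powr (s-1) * exp (-t) * exp (-(lam * sqrt (2*t)))))"
      "(\<lambda>j. norm (f j t)) sums (indicator {0<..} t * (t powr (s-1) * exp (-t) * exp (lam * sqrt (2*t))))"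
      by auto
  qed
  have fm[measurable]: "f j \<in> borel_measurable borel" for j unfolding f_def by measurable
  have bound: "(\<integral>\<^sup>+t. ennreal (indicator {0<..} t * (t powr (s-1) * exp (-t) * exp (lam * sqrt (2*t)))) \<partial>lborel) < \<infinity>"
  proof -
    have "(\<integral>\<^sup>+t. ennreal (indicator {0<..} t * (t powr (s-1) * exp (-t) * exp (lam * sqrt (2*t)))) \<partial>lborel)
      \<le> (\<integral>\<^sup>+t. ennreal (exp (lam\<^sup>2)) * (ennreal (t powr (s-1) * exp (-((1/2)*t))) * indicator {0<..} t) \<partial>lborel)"
    proof (intro nn_integral_mono)
      fix t :: real
      show "ennreal (indicator {0<..} t * (t powr (s-1) * exp (-t) * exp (lam * sqrt (2*t))))
        \<le> ennreal (exp (lam\<^sup>2)) * (ennreal (t powr (s-1) * exp (-((1/2)*t))) * indicator {0<..} t)"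
      proof (cases "t > 0")
        case True
        have sq: "sqrt (2*t) ^ 2 = 2*t" using True by simp
        have "0 \<le> (lam - sqrt (2*t) / 2)\<^sup>2" by simp
        then have "lam * sqrt (2*t) \<le> lam\<^sup>2 + t/2" using sq by (simp add: power2_diff power_divide)
        then have "exp (-t) * exp (lam * sqrt (2*t)) \<le> exp (lam\<^sup>2) * exp (-((1/2)*t))"
          by (simp add: exp_add[symmetric])
        then have "t powr (s-1) * exp (-t) * exp (lam * sqrt (2*t)) \<le> exp (lam\<^sup>2) * (t powr (s-1) * exp (-((1/2)*t)))"
          by (metis (no_types, lifting) mult.assoc mult.left_commute mult_left_mono powr_ge_zero)
        then show ?thesis using True by (simp add: ennreal_mult'[symmetric])
      qed simp
    qed
    also have "\<dots> = ennreal (exp (lam\<^sup>2)) * (\<integral>\<^sup>+t. ennreal (t powr (s-1) * exp (-((1/2)*t))) * indicator {0<..} t \<partial>lborel)"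
      by (rule nn_integral_cmult) simp
    also have "\<dots> = ennreal (exp (lam\<^sup>2)) * ennreal ((1/2) powr (-s) * Gamma s)"
      unfolding gamma_nn[OF s, of "1/2", OF half_gt_zero[OF zero_less_one]] ..
    also have "\<dots> < \<infinity>" by (simp add: ennreal_mult'[symmetric])
    finally show ?thesis .
  qed
  have summ: "summable (\<lambda>j. \<integral>t. norm (f j t) \<partial>lborel)"
  proof (rule summable_suminf_not_top)
    show "0 \<le> (\<integral>t. norm (f j t) \<partial>lborel)" for j by simp
    have "(\<Sum>j. ennreal (\<integral>t. norm (f j t) \<partial>lborel)) = (\<Sum>j. \<integral>\<^sup>+t. ennreal (norm (f j t)) \<partial>lborel)"
      by (intro suminf_cong nn_integral_eq_integral[symmetric]) (use nfint in auto)
    also have "\<dots> = (\<integral>\<^sup>+t. (\<Sum>j. ennreal (norm (f j t))) \<partial>lborel)"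
      by (rule nn_integral_suminf[symmetric]) auto
    also have "\<dots> = (\<integral>\<^sup>+t. ennreal (indicator {0<..} t * (t powr (s-1) * exp (-t) * exp (lam * sqrt (2*t)))) \<partial>lborel)"
      by (intro nn_integral_cong suminf_ennreal_eq nptw) auto
    finally show "(\<Sum>j. ennreal (\<integral>t. norm (f j t) \<partial>lborel)) \<noteq> \<top>" using bound by simp
  qed
  have AEs: "AE t in lborel. summable (\<lambda>j. norm (f j t))" using nptw by (auto simp: sums_iff)
  have I: "integrable lborel (\<lambda>t. \<Sum>j. f j t)" and S: "(\<lambda>j. integral\<^sup>L lborel (f j)) sums (\<integral>t. (\<Sum>j. f j t) \<partial>lborel)"
    using integrable_suminf[OF _ AEs summ] sums_integral[OF _ AEs summ] fint by auto
  have eqf: "(\<lambda>t. \<Sum>j. f j t) = (\<lambda>t. indicator {0<..} t *\<^sub>R (t powr (s-1) * exp (-t) * exp (-(lam * sqrt (2*t)))))"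
    using ptw by (auto simp: fun_eq_iff sums_iff)
  show ?thesis
    using I S fint unfolding eqf set_integrable_def set_lebesgue_integral_def
    by (auto simp: c_def mult.commute)
qed

lemma set_int_to_nn:
  fixes f :: "real \<Rightarrow> real"
  assumes "set_integrable lborel A f" and "\<And>x. x \<in> A \<Longrightarrow> 0 \<le> f x"
  shows "(\<integral>\<^sup>+x. ennreal (f x) * indicator A x \<partial>lborel) = ennreal (LINT x:A|lborel. f x)"
proof -
  have "(\<integral>\<^sup>+x. ennreal (f x) * indicator A x \<partial>lborel) = (\<integral>\<^sup>+x. ennreal (indicator A x *\<^sub>R f x) \<partial>lborel)"
    by (intro nn_integral_cong) (auto simp: indicator_def)
  also have "\<dots> = ennreal (\<integral>x. indicator A x *\<^sub>R f x \<partial>lborel)"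
    using assms by (intro nn_integral_eq_integral) (auto simp: set_integrable_def indicator_def)
  finally show ?thesis by (simp add: set_lebesgue_integral_def)
qed

lemma G_formula:
  fixes lam q :: real
  assumes lam: "lam > 0" and q: "q > -1/2"
  defines "I1 \<equiv> (LINT t:{0<..}|lborel. t powr (q+1-1) * exp (-t) * exp (-(lam * sqrt (2*t))))"
      and "I2 \<equiv> (LINT t:{0<..}|lborel. t powr (q+1/2-1) * exp (-t) * exp (-(lam * sqrt (2*t))))"
  shows "(\<integral>\<^sup>+x. ennreal ((x\<^sup>2/(lam\<^sup>2+x\<^sup>2)) powr q * std_normal_density x) \<partial>lborel)
          = ennreal ((I1 + lam / sqrt 2 * I2) / Gamma (q+1))"
proof -
  define F where "F = (\<lambda>x::real. (x\<^sup>2/(lam\<^sup>2+x\<^sup>2)) powr q * std_normal_density x)"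
  define H where "H = (\<lambda>x t::real. ennreal ((1 + lam\<^sup>2/x\<^sup>2) * std_normal_density x) *
        (ennreal (t powr (q+1-1) * exp (-((1 + lam\<^sup>2/x\<^sup>2)*t))) * indicator {0<..} t))"
  have q1: "q + 1 > 0" using q by simp
  have q2: "q + 1/2 > 0" using q by simp
  have G1: "Gamma (q+1) > 0" using q1 by (rule Gamma_real_pos)
  have s1: "set_integrable lborel {0<..} (\<lambda>t. t powr (q+1-1) * exp (-t) * exp (-(lam * sqrt (2*t))))"
    using series_int[OF less_imp_le[OF lam] q1] by simp
  have s2: "set_integrable lborel {0<..} (\<lambda>t. t powr (q+1/2-1) * exp (-t) * exp (-(lam * sqrt (2*t))))"
    using series_int[OF less_imp_le[OF lam] q2] by simp
  have I1nn: "I1 \<ge> 0" unfolding I1_def set_lebesgue_integral_def by (intro integral_nonneg_AE AE_I2) (auto simp: indicator_def)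
  have I2nn: "I2 \<ge> 0" unfolding I2_def set_lebesgue_integral_def by (intro integral_nonneg_AE AE_I2) (auto simp: indicator_def)
  have n1: "(\<integral>\<^sup>+t. ennreal (t powr (q+1-1) * exp (-t) * exp (-(lam * sqrt (2*t)))) * indicator {0<..} t \<partial>lborel) = ennreal I1"
    unfolding I1_def by (rule set_int_to_nn[OF s1]) simp
  have n2: "(\<integral>\<^sup>+t. ennreal (t powr (q+1/2-1) * exp (-t) * exp (-(lam * sqrt (2*t)))) * indicator {0<..} t \<partial>lborel) = ennreal I2"
    unfolding I2_def by (rule set_int_to_nn[OF s2]) simp
  have step1: "ennreal (Gamma (q+1) * F x) = (\<integral>\<^sup>+t. H x t \<partial>lborel)" if x: "x \<noteq> 0" for x
  proof -
    define a where "a = lam\<^sup>2/x\<^sup>2"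
    have a: "a > 0" using x lam by (simp add: a_def)
    have "(\<integral>\<^sup>+t. H x t \<partial>lborel) = ennreal ((1 + a) * std_normal_density x) *
        (\<integral>\<^sup>+t. ennreal (t powr (q+1-1) * exp (-((1 + a)*t))) * indicator {0<..} t \<partial>lborel)"
      unfolding H_def a_def by (rule nn_integral_cmult) simp
    also have "\<dots> = ennreal ((1 + a) * std_normal_density x) * ennreal ((1+a) powr (-(q+1)) * Gamma (q+1))"
      by (subst gamma_nn[OF q1]) (use a in auto)
    also have "\<dots> = ennreal (Gamma (q+1) * F x)"
    proof -
      have "x\<^sup>2/(lam\<^sup>2+x\<^sup>2) = 1/(1+a)" using x by (simp add: a_def field_simps)
      then have "(x\<^sup>2/(lam\<^sup>2+x\<^sup>2)) powr q = (1+a) powr (-q)" using a by (simp add: powr_minus_divide powr_divide)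
      moreover have "(1+a) * (1+a) powr (-(q+1)) = (1+a) powr (-q)"
      proof -
        have "(1+a) * (1+a) powr (-(q+1)) = (1+a) powr 1 * (1+a) powr (-(q+1))" using a by simp
        also have "\<dots> = (1+a) powr (1 + (-(q+1)))" by (rule powr_add[symmetric])
        also have "\<dots> = (1+a) powr (-q)" by simp
        finally show ?thesis .
      qed
      ultimately have e: "((1 + a) * std_normal_density x) * ((1+a) powr (-(q+1)) * Gamma (q+1)) = Gamma (q+1) * F x"
        unfolding F_def by (metis (no_types, lifting) mult.assoc mult.commute)
      show ?thesis unfolding e[symmetric] using a by (subst ennreal_mult'[symmetric]) auto
    qed
    finally show ?thesis by simp
  qed
  have Hm[measurable]: "case_prod H \<in> borel_measurable (lborel \<Otimes>\<^sub>M lborel)"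
    unfolding H_def by measurable
  have "ennreal (Gamma (q+1)) * (\<integral>\<^sup>+x. ennreal (F x) \<partial>lborel) = (\<integral>\<^sup>+x. ennreal (Gamma (q+1) * F x) \<partial>lborel)"
    using G1 by (subst nn_integral_cmult[symmetric]) (auto simp: F_def ennreal_mult')
  also have "\<dots> = (\<integral>\<^sup>+x. \<integral>\<^sup>+t. H x t \<partial>lborel \<partial>lborel)"
  proof (intro nn_integral_cong_AE)
    show "AE x in lborel. ennreal (Gamma (q+1) * F x) = (\<integral>\<^sup>+t. H x t \<partial>lborel)"
      using AE_lborel_singleton[of 0]
    proof eventually_elim
      case (elim x) then show ?case by (intro step1) simp
    qed
  qed
  also have "\<dots> = (\<integral>\<^sup>+t. \<integral>\<^sup>+x. H x t \<partial>lborel \<partial>lborel)"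
    by (rule lborel_pair.Fubini'[symmetric]) (rule Hm)
  also have "\<dots> = (\<integral>\<^sup>+t. ennreal (t powr q * exp (-t) * (exp (-(lam * sqrt (2*t))) * (1 + lam / sqrt (2*t)))) * indicator {0<..} t \<partial>lborel)"
  proof (intro nn_integral_cong)
    fix t :: real
    show "(\<integral>\<^sup>+x. H x t \<partial>lborel) = ennreal (t powr q * exp (-t) * (exp (-(lam * sqrt (2*t))) * (1 + lam / sqrt (2*t)))) * indicator {0<..} t"
    proof (cases "t > 0")
      case True
      have "(\<integral>\<^sup>+x. H x t \<partial>lborel) = (\<integral>\<^sup>+x. ennreal (t powr q * exp (-t)) * ennreal ((1 + lam\<^sup>2/x\<^sup>2) * exp (-(t*lam\<^sup>2/x\<^sup>2)) * std_normal_density x) \<partial>lborel)"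
      proof (intro nn_integral_cong)
        fix x :: real
        have "exp (-((1 + lam\<^sup>2/x\<^sup>2)*t)) = exp (-t) * exp (-(t*lam\<^sup>2/x\<^sup>2))"
          by (simp add: exp_add[symmetric] algebra_simps)
        then show "H x t = ennreal (t powr q * exp (-t)) * ennreal ((1 + lam\<^sup>2/x\<^sup>2) * exp (-(t*lam\<^sup>2/x\<^sup>2)) * std_normal_density x)"
          using True by (simp add: H_def ennreal_mult'[symmetric] mult_ac)
      qed
      also have "\<dots> = ennreal (t powr q * exp (-t)) * (\<integral>\<^sup>+x. ennreal ((1 + lam\<^sup>2/x\<^sup>2) * exp (-(t*lam\<^sup>2/x\<^sup>2)) * std_normal_density x) \<partial>lborel)"
        by (rule nn_integral_cmult) simp
      also have "\<dots> = ennreal (t powr q * exp (-t)) * ennreal (exp (-(lam * sqrt (2*t))) * (1 + lam / sqrt (2*t)))"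
        by (simp only: K_int[OF lam True])
      finally show ?thesis using True by (simp add: ennreal_mult'[symmetric])
    next
      case False
      then show ?thesis by (simp add: H_def)
    qed
  qed
  also have "\<dots> = (\<integral>\<^sup>+t. ennreal (t powr (q+1-1) * exp (-t) * exp (-(lam * sqrt (2*t)))) * indicator {0<..} t +
        ennreal (lam / sqrt 2) * (ennreal (t powr (q+1/2-1) * exp (-t) * exp (-(lam * sqrt (2*t)))) * indicator {0<..} t) \<partial>lborel)"
  proof (intro nn_integral_cong)
    fix t :: real
    show "ennreal (t powr q * exp (-t) * (exp (-(lam * sqrt (2*t))) * (1 + lam / sqrt (2*t)))) * indicator {0<..} t
      = ennreal (t powr (q+1-1) * exp (-t) * exp (-(lam * sqrt (2*t)))) * indicator {0<..} t +
        ennreal (lam / sqrt 2) * (ennreal (t powr (q+1/2-1) * exp (-t) * exp (-(lam * sqrt (2*t)))) * indicator {0<..} t)"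
    proof (cases "t > 0")
      case True
      have p: "t powr (q+1/2-1) = t powr q / sqrt t"
        using True by (simp add: powr_diff powr_half_sqrt[symmetric])
      have "t powr q * exp (-t) * (exp (-(lam * sqrt (2*t))) * (1 + lam / sqrt (2*t)))
         = t powr (q+1-1) * exp (-t) * exp (-(lam * sqrt (2*t))) + lam / sqrt 2 * (t powr (q+1/2-1) * exp (-t) * exp (-(lam * sqrt (2*t))))"
        unfolding p using True by (simp add: real_sqrt_mult field_simps)
      then show ?thesis using True lam
        by (simp add: ennreal_mult'[symmetric] ennreal_plus[symmetric] del: ennreal_plus)
    qed simp
  qed
  also have "\<dots> = ennreal I1 + ennreal (lam / sqrt 2) * ennreal I2"
    by (subst nn_integral_add, simp, simp, subst nn_integral_cmult, simp,
        simp only: n1 n2)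
  also have "\<dots> = ennreal (I1 + lam / sqrt 2 * I2)"
    using I1nn I2nn lam by (simp add: ennreal_mult'[symmetric] ennreal_plus[symmetric] del: ennreal_plus)
  finally have eq: "ennreal (Gamma (q+1)) * (\<integral>\<^sup>+x. ennreal (F x) \<partial>lborel) = ennreal (I1 + lam / sqrt 2 * I2)" .
  have "(\<integral>\<^sup>+x. ennreal (F x) \<partial>lborel) = ennreal (1 / Gamma (q+1)) * (ennreal (Gamma (q+1)) * (\<integral>\<^sup>+x. ennreal (F x) \<partial>lborel))"
    using G1 by (simp add: mult.assoc[symmetric] ennreal_mult'[symmetric])
  also have "\<dots> = ennreal ((I1 + lam / sqrt 2 * I2) / Gamma (q+1))"
    unfolding eq using G1 by (simp add: ennreal_mult'[symmetric])
  finally show ?thesis by (simp add: F_def)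
qed

lemma powr_m_half: "y > 0 \<Longrightarrow> y powr (-1/2) = 1 / sqrt y"
proof -
  assume y: "y > 0"
  have h: "(-1/2::real) = -(1/2)" by simp
  have "y powr (-1/2) = inverse (y powr (1/2))" unfolding h by (rule powr_minus)
  also have "\<dots> = 1 / sqrt y" using y by (simp add: powr_half_sqrt inverse_eq_divide)
  finally show ?thesis .
qed

lemma powr_m_3half: "y > 0 \<Longrightarrow> y powr (-3/2) = 1 / (y * sqrt y)"
proof -
  assume y: "y > 0"
  have h: "(-3/2::real) = -(1 + 1/2)" by simp
  have "y powr (-3/2) = inverse (y powr (1 + 1/2))" unfolding h by (rule powr_minus)
  also have "y powr (1 + 1/2) = y powr 1 * y powr (1/2)" by (rule powr_add)
  also have "\<dots> = y * sqrt y" using y by (simp add: powr_half_sqrt)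
  finally show ?thesis using y by (simp add: inverse_eq_divide)
qed

lemma abs_moment_nn:
  fixes q :: real assumes q: "q > -1/2"
  shows "(\<integral>\<^sup>+x. ennreal (\<bar>x\<bar> powr (2*q) * std_normal_density x) \<partial>lborel) = ennreal (2 powr q * Gamma (q + 1/2) / sqrt pi)"
proof -
  have q2: "q + 1/2 > 0" using q by simp
  have "(\<integral>\<^sup>+x. ennreal (\<bar>x\<bar> powr (2*q) * std_normal_density x) \<partial>lborel)
      = 2 * (\<integral>\<^sup>+x. ennreal (\<bar>x\<bar> powr (2*q) * std_normal_density x) * indicator {0<..} x \<partial>lborel)"
    by (rule nn_even) (auto simp: std_normal_density_def)
  also have "(\<integral>\<^sup>+x. ennreal (\<bar>x\<bar> powr (2*q) * std_normal_density x) * indicator {0<..} x \<partial>lborel)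
      = (\<integral>\<^sup>+x. ennreal (x powr (2*q) * std_normal_density x) * indicator {0<..} x \<partial>lborel)"
    by (intro nn_integral_cong) (auto simp: indicator_def)
  also have "\<dots> = (\<integral>\<^sup>+t. ennreal (\<bar>1 / sqrt (2*t)\<bar> * (sqrt (2*t) powr (2*q) * std_normal_density (sqrt (2*t)))) * indicator {0<..} t \<partial>lborel)"
  proof (rule nn_subst)
    show "(\<lambda>t. sqrt (2*t)) ` {0<..} = {0<..}"
    proof
      show "(\<lambda>t. sqrt (2*t)) ` {0<..} \<subseteq> {0<..}" by auto
      show "{0<..} \<subseteq> (\<lambda>t. sqrt (2*t)) ` {0<..}"
      proof
        fix y :: real assume "y \<in> {0<..}"
        then show "y \<in> (\<lambda>t. sqrt (2*t)) ` {0<..}" by (intro image_eqI[of _ _ "y\<^sup>2/2"]) auto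
      qed
    qed
    show "inj_on (\<lambda>t. sqrt (2*t)) {0<..}" by (auto simp: inj_on_def)
    show "((\<lambda>t. sqrt (2*t)) has_real_derivative 1 / sqrt (2*t)) (at t)" if "t \<in> {0<..}" for t
      using that by (auto intro!: derivative_eq_intros simp: field_simps)
  qed auto
  also have "\<dots> = (\<integral>\<^sup>+t. ennreal (2 powr (q - 1/2) / sqrt (2*pi)) * (ennreal (t powr (q + 1/2 - 1) * exp (-(1*t))) * indicator {0<..} t) \<partial>lborel)"
  proof (intro nn_integral_cong)
    fix t :: real
    show "ennreal (\<bar>1 / sqrt (2*t)\<bar> * (sqrt (2*t) powr (2*q) * std_normal_density (sqrt (2*t)))) * indicator {0<..} t
      = ennreal (2 powr (q - 1/2) / sqrt (2*pi)) * (ennreal (t powr (q + 1/2 - 1) * exp (-(1*t))) * indicator {0<..} t)"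
    proof (cases "t > 0")
      case True
      have a: "sqrt (2*t) powr (2*q) = (2*t) powr q"
        using True by (simp add: powr_half_sqrt[symmetric] powr_powr)
      have b: "(2*t) powr q / sqrt (2*t) = (2*t) powr (q - 1/2)"
        using True by (simp add: powr_diff powr_half_sqrt)
      have "\<bar>1 / sqrt (2*t)\<bar> * (sqrt (2*t) powr (2*q) * std_normal_density (sqrt (2*t)))
          = ((2*t) powr q / sqrt (2*t)) * exp (-t) / sqrt (2*pi)"
        using True unfolding a by (simp add: std_normal_density_def)
      also have "\<dots> = 2 powr (q - 1/2) / sqrt (2*pi) * (t powr (q + 1/2 - 1) * exp (-(1*t)))"
        unfolding b using True by (simp add: powr_mult)
      finally show ?thesis using True by (simp add: ennreal_mult'[symmetric])
    qed simp
  qed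
  also have "\<dots> = ennreal (2 powr (q - 1/2) / sqrt (2*pi)) * ennreal (1 powr (-(q+1/2)) * Gamma (q+1/2))"
    by (subst nn_integral_cmult, simp, subst gamma_nn[OF q2 zero_less_one], rule refl)
  also have "2 * (ennreal (2 powr (q - 1/2) / sqrt (2*pi)) * ennreal (1 powr (-(q+1/2)) * Gamma (q+1/2)))
       = ennreal (2 powr q * Gamma (q + 1/2) / sqrt pi)"
  proof -
    have "2 * (2 powr (q - 1/2) / sqrt (2*pi) * Gamma (q+1/2)) = 2 powr q * Gamma (q + 1/2) / sqrt pi"
    proof -
      have a: "sqrt (2*pi) = 2 powr (1/2) * sqrt pi" by (simp add: real_sqrt_mult powr_half_sqrt)
      have b: "2 powr (q - 1/2) / 2 powr (1/2) = (2::real) powr (q - 1)"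
      proof -
        have "2 powr (q - 1/2) / 2 powr (1/2) = (2::real) powr ((q - 1/2) - 1/2)" by (rule powr_diff[symmetric])
        then show ?thesis by simp
      qed
      have c: "2 * 2 powr (q - 1) = (2::real) powr q"
      proof -
        have "2 * 2 powr (q - 1) = (2::real) powr 1 * 2 powr (q - 1)" by simp
        also have "\<dots> = 2 powr (1 + (q - 1))" by (rule powr_add[symmetric])
        finally show ?thesis by simp
      qed
      have "2 * (2 powr (q - 1/2) / sqrt (2*pi) * Gamma (q+1/2)) = (2 * (2 powr (q - 1/2) / 2 powr (1/2))) * Gamma (q+1/2) / sqrt pi"
        unfolding a by simp
      then show ?thesis unfolding b c .
    qed
    moreover have "0 \<le> Gamma (q+1/2)" using q2 by (simp add: Gamma_real_pos less_imp_le)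
    ultimately show ?thesis
      by (simp add: ennreal_mult'[symmetric] ennreal_numeral[symmetric] del: ennreal_numeral)
  qed
  finally show ?thesis .
qed

lemma F_even2:
  fixes lam q :: real
  shows "(\<integral>\<^sup>+x. ennreal (2 * ((x\<^sup>2/(lam\<^sup>2+x\<^sup>2)) powr q * std_normal_density x)) * indicator {0<..} x \<partial>lborel) = (\<integral>\<^sup>+x. ennreal ((x\<^sup>2/(lam\<^sup>2+x\<^sup>2)) powr q * std_normal_density x) \<partial>lborel)"
proof -
  define F where "F = (\<lambda>x::real. (x\<^sup>2/(lam\<^sup>2+x\<^sup>2)) powr q * std_normal_density x)"
  have Fm: "F \<in> borel_measurable borel" unfolding F_def by measurable
  have Fnn: "0 \<le> F x" for x by (simp add: F_def)
  have ev: "F (-x) = F x" for x by (simp add: F_def std_normal_density_def)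
  have m2: "(\<lambda>x. ennreal (F x) * indicator {0<..} x) \<in> borel_measurable lborel"
    using Fm by measurable
  have "(\<integral>\<^sup>+x. ennreal (2 * F x) * indicator {0<..} x \<partial>lborel) = (\<integral>\<^sup>+x. 2 * (ennreal (F x) * indicator {0<..} x) \<partial>lborel)"
  proof (rule nn_integral_cong)
    fix x :: real
    have "ennreal (2 * F x) = ennreal 2 * ennreal (F x)" by (rule ennreal_mult) (auto simp: Fnn)
    then show "ennreal (2 * F x) * indicator {0<..} x = 2 * (ennreal (F x) * indicator {0<..} x)"
      by (simp only: ennreal_numeral mult.assoc)
  qed
  also have "\<dots> = 2 * (\<integral>\<^sup>+x. ennreal (F x) * indicator {0<..} x \<partial>lborel)"
    by (rule nn_integral_cmult[OF m2])
  also have "\<dots> = (\<integral>\<^sup>+x. ennreal (F x) \<partial>lborel)"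
    by (rule nn_even[OF Fm ev, symmetric])
  finally show ?thesis unfolding F_def .
qed

lemma mu_nn:
  fixes lam q :: real assumes lam: "lam > 0"
  shows "(\<integral>\<^sup>+p. ennreal (p powr q * P1_density lam p) * indicator {0<..<1} p \<partial>lborel)
       = (\<integral>\<^sup>+x. ennreal ((x\<^sup>2/(lam\<^sup>2+x\<^sup>2)) powr q * std_normal_density x) \<partial>lborel)"
proof -
  define g where "g = (\<lambda>x::real. x\<^sup>2/(lam\<^sup>2+x\<^sup>2))"
  define g' where "g' = (\<lambda>x::real. 2*x*lam\<^sup>2/(lam\<^sup>2+x\<^sup>2)\<^sup>2)"
  have l2: "lam\<^sup>2 > 0" using lam by simp
  have "(\<integral>\<^sup>+p. ennreal (p powr q * P1_density lam p) * indicator {0<..<1} p \<partial>lborel)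
      = (\<integral>\<^sup>+x. ennreal (\<bar>g' x\<bar> * ((g x) powr q * P1_density lam (g x))) * indicator {0<..} x \<partial>lborel)"
  proof (rule nn_subst)
    show "g ` {0<..} = {0<..<1}"
    proof
      show "g ` {0<..} \<subseteq> {0<..<1}"
      proof
        fix y assume "y \<in> g ` {0<..}"
        then obtain x where x: "x > 0" "y = g x" by auto
        have d: "lam\<^sup>2 + x\<^sup>2 > 0" using l2 by (simp add: add_pos_nonneg)
        have "x\<^sup>2 > 0" using x by simp
        then show "y \<in> {0<..<1}" using d l2 x by (simp add: g_def divide_less_eq)
      qed
      show "{0<..<1} \<subseteq> g ` {0<..}"
      proof
        fix p :: real assume p: "p \<in> {0<..<1}"
        define x where "x = lam * sqrt (p / (1-p))"
        have x: "x > 0" using p lam by (simp add: x_def)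
        have x2: "x\<^sup>2 = lam\<^sup>2 * (p/(1-p))" using p by (simp add: x_def power_mult_distrib)
        have "g x = p" unfolding g_def x2 using p l2 by (simp add: field_simps)
        then show "p \<in> g ` {0<..}" using x by (intro image_eqI[of _ _ x]) auto
      qed
    qed
    have "strict_mono_on {0<..} g"
    proof (rule strict_mono_onI)
      fix x y :: real assume xy: "x \<in> {0<..}" "y \<in> {0<..}" "x < y"
      then have "x\<^sup>2 < y\<^sup>2" by (simp add: power_strict_mono)
      then have "x\<^sup>2 * (lam\<^sup>2 + y\<^sup>2) < y\<^sup>2 * (lam\<^sup>2 + x\<^sup>2)" using l2 by (simp add: algebra_simps)
      then show "g x < g y" unfolding g_def using l2
        by (simp add: divide_less_eq less_divide_eq add_pos_nonneg field_simps)
    qed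
    then show "inj_on g {0<..}" by (rule strict_mono_on_imp_inj_on)
    show "(g has_real_derivative g' x) (at x)" if "x \<in> {0<..}" for x
      unfolding g_def g'_def
      apply (rule derivative_eq_intros refl)+
      subgoal using lam by (metis add_pos_nonneg zero_less_power2 zero_le_power2 less_irrefl power2_less_0 not_less)
      subgoal
      proof -
        have "real 2 * (1 * x ^ (2 - Suc 0)) * (lam\<^sup>2+x\<^sup>2) - x\<^sup>2 * (0 + real 2 * (1 * x ^ (2 - Suc 0))) = 2*x*lam\<^sup>2"
          by (simp add: power2_eq_square algebra_simps)
        then show ?thesis by (simp add: power2_eq_square)
      qed
      done
    show "0 \<le> p powr q * P1_density lam p" if "p \<in> {0<..<1}" for p
      using that lam by (simp add: P1_density_def)
    have fm: "(\<lambda>p. p powr q * P1_density lam p) \<in> borel_measurable borel"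
      unfolding P1_density_def by measurable
    then show "(\<lambda>p. p powr q * P1_density lam p) \<in> borel_measurable borel" .
    have gm: "g \<in> borel_measurable borel" unfolding g_def by measurable
    have g'm: "g' \<in> borel_measurable borel" unfolding g'_def by measurable
    have "(\<lambda>x. (\<lambda>p. p powr q * P1_density lam p) (g x)) \<in> borel_measurable borel"
      by (rule measurable_compose[OF gm fm])
    then show "(\<lambda>x. \<bar>g' x\<bar> * (g x powr q * P1_density lam (g x))) \<in> borel_measurable borel"
      by (rule borel_measurable_times[OF borel_measurable_abs[OF g'm]])
  qed auto
  also have "\<dots> = (\<integral>\<^sup>+x. ennreal (2 * ((x\<^sup>2/(lam\<^sup>2+x\<^sup>2)) powr q * std_normal_density x)) * indicator {0<..} x \<partial>lborel)"
  proof (intro nn_integral_cong)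
    fix x :: real
    show "ennreal (\<bar>g' x\<bar> * ((g x) powr q * P1_density lam (g x))) * indicator {0<..} x
      = ennreal (2 * ((x\<^sup>2/(lam\<^sup>2+x\<^sup>2)) powr q * std_normal_density x)) * indicator {0<..} x"
    proof (cases "x > 0")
      case True
      define u where "u = lam\<^sup>2 + x\<^sup>2"
      have u: "u > 0" using l2 by (simp add: u_def add_pos_nonneg)
      define r where "r = sqrt u"
      have r: "r > 0" "r * r = u" using u by (auto simp: r_def)
      have gx: "g x = x\<^sup>2 / u" by (simp add: g_def u_def)
      have gx1: "1 - g x = lam\<^sup>2 / u"
      proof -
        have "lam\<^sup>2 = u - x\<^sup>2" by (simp add: u_def)
        then have "lam\<^sup>2 / u = (u - x\<^sup>2) / u" by simp
        also have "\<dots> = u / u - x\<^sup>2 / u" by (rule diff_divide_distrib)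
        also have "\<dots> = 1 - x\<^sup>2 / u" using u by simp
        finally show ?thesis by (simp add: gx)
      qed
      have gpos: "g x > 0" using True u by (simp add: gx)
      have g1pos: "1 - g x > 0" using u l2 by (simp add: gx1)
      have s1: "sqrt (g x) = x / r" using True u by (simp add: gx r_def real_sqrt_divide)
      have s2: "sqrt (1 - g x) = lam / r" using lam u by (simp add: gx1 r_def real_sqrt_divide)
      have e: "g x / (1 - g x) = x\<^sup>2 / lam\<^sup>2" unfolding gx1 using u l2 by (simp add: gx)
      have "\<bar>g' x\<bar> * ((g x) powr q * P1_density lam (g x))
          = (g x) powr q * (\<bar>g' x\<bar> * lam / sqrt (2*pi) * (1 / sqrt (g x)) * (1 / ((1 - g x) * sqrt (1 - g x))))
             * exp (- (lam\<^sup>2 / 2) * (x\<^sup>2 / lam\<^sup>2))"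
        unfolding P1_density_def powr_m_half[OF gpos] powr_m_3half[OF g1pos] e by (simp add: mult_ac)
      also have "\<bar>g' x\<bar> * lam / sqrt (2*pi) * (1 / sqrt (g x)) * (1 / ((1 - g x) * sqrt (1 - g x))) = 2 / sqrt (2*pi)"
      proof -
        have gd: "\<bar>g' x\<bar> = 2*x*lam\<^sup>2/u\<^sup>2" using True by (simp add: g'_def u_def)
        have ur: "u = r * r" using r by simp
        show ?thesis unfolding gd s1 s2 unfolding gx1 ur using True lam r u
          by (simp add: field_simps power2_eq_square)
      qed
      also have "exp (- (lam\<^sup>2 / 2) * (x\<^sup>2 / lam\<^sup>2)) = exp (- x\<^sup>2 / 2)" using l2 by (simp add: field_simps)
      finally have fin: "\<bar>g' x\<bar> * ((g x) powr q * P1_density lam (g x)) = (g x) powr q * (2 / sqrt (2*pi)) * exp (- x\<^sup>2 / 2)" .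
      have alg: "\<And>a s e::real. a * (2 / s) * e = 2 * (a * (1 / s * e))" by (simp add: divide_inverse mult_ac)
      have "\<bar>g' x\<bar> * ((g x) powr q * P1_density lam (g x)) = 2 * ((x\<^sup>2/(lam\<^sup>2+x\<^sup>2)) powr q * std_normal_density x)"
        using fin[unfolded alg g_def] unfolding std_normal_density_def g_def .
      then show ?thesis by simp
    qed simp
  qed
  also have "\<dots> = (\<integral>\<^sup>+x. ennreal ((x\<^sup>2/(lam\<^sup>2+x\<^sup>2)) powr q * std_normal_density x) \<partial>lborel)"
    by (rule F_even2)
  finally show ?thesis .
qed

lemma not_npi: fixes x :: real assumes "x > -1" "x \<noteq> 0" shows "x \<notin> \<int>\<^sub>\<le>\<^sub>0"
proof
  assume "x \<in> \<int>\<^sub>\<le>\<^sub>0"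
  then obtain n where n: "x = - of_nat n" by (rule nonpos_Ints_cases')
  then have "real n < 1" using assms by simp
  then have "n = 0" by simp
  then show False using n assms by simp
qed

lemma dup_real:
  fixes q :: real assumes q: "q > -1/2" "q \<noteq> 0"
  shows "Gamma q * Gamma (q + 1/2) = 2 powr (1 - 2*q) * sqrt pi * Gamma (2*q)"
proof -
  have a: "complex_of_real q \<notin> \<int>\<^sub>\<le>\<^sub>0" using not_npi[of q] q by (simp add: of_real_in_nonpos_Ints_iff)
  have b: "complex_of_real q + 1/2 \<notin> \<int>\<^sub>\<le>\<^sub>0"
  proof -
    have "q + 1/2 \<notin> \<int>\<^sub>\<le>\<^sub>0" by (rule not_npi) (use q in auto)
    then have "complex_of_real (q + 1/2) \<notin> \<int>\<^sub>\<le>\<^sub>0" by (metis of_real_in_nonpos_Ints_iff)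
    moreover have "complex_of_real q + 1/2 = complex_of_real (q + 1/2)" by simp
    ultimately show ?thesis by metis
  qed
  have D: "Gamma (complex_of_real q) * Gamma (complex_of_real q + 1/2) =
        exp ((1 - 2 * complex_of_real q) * of_real (ln 2)) * of_real (sqrt pi) * Gamma (2 * complex_of_real q)"
    by (rule Gamma_legendre_duplication[OF a b])
  have e1: "complex_of_real q + 1/2 = complex_of_real (q + 1/2)" by simp
  have e2: "2 * complex_of_real q = complex_of_real (2*q)" by simp
  have e3: "exp ((1 - 2 * complex_of_real q) * of_real (ln 2)) = complex_of_real (2 powr (1 - 2*q))"
  proof -
    have "(1 - 2 * complex_of_real q) * of_real (ln 2) = complex_of_real ((1 - 2*q) * ln 2)" by simp
    then show ?thesis by (simp add: exp_of_real[symmetric] powr_def)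
  qed
  have "complex_of_real (Gamma q * Gamma (q + 1/2)) = Gamma (complex_of_real q) * Gamma (complex_of_real (q + 1/2))"
    by (simp only: of_real_mult Gamma_complex_of_real)
  also have "\<dots> = Gamma (complex_of_real q) * Gamma (complex_of_real q + 1/2)" by (simp only: e1)
  also have "\<dots> = exp ((1 - 2 * complex_of_real q) * of_real (ln 2)) * of_real (sqrt pi) * Gamma (2 * complex_of_real q)"
    by (rule D)
  also have "\<dots> = complex_of_real (2 powr (1 - 2*q)) * of_real (sqrt pi) * Gamma (2 * complex_of_real q)"
    by (simp only: e3)
  also have "\<dots> = complex_of_real (2 powr (1 - 2*q)) * of_real (sqrt pi) * Gamma (complex_of_real (2*q))"
    by (simp only: e2)
  also have "\<dots> = complex_of_real (2 powr (1 - 2*q) * sqrt pi * Gamma (2*q))"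
    by (simp only: Gamma_complex_of_real, simp only: of_real_mult)
  finally have "complex_of_real (Gamma q * Gamma (q + 1/2)) = complex_of_real (2 powr (1 - 2*q) * sqrt pi * Gamma (2*q))" .
  then show ?thesis by (simp only: of_real_eq_iff)
qed

definition cc :: "real \<Rightarrow> nat \<Rightarrow> real" where
  "cc lam j = (-lam)^j * 2 powr (real j / 2) / fact j"

lemma alg1: "(N::real) \<noteq> 0 \<Longrightarrow> F \<noteq> 0 \<Longrightarrow> -(N/2) * ((-l) * y * (P * s) / (N * F)) = l * s / 2 * (y * P / F)"
  by (simp add: field_simps)

lemma cc_shift: "lam / sqrt 2 * cc lam m = -((real m + 1)/2) * cc lam (Suc m)"
proof -
  have p: "(2::real) powr (real (Suc m) / 2) = 2 powr (real m / 2) * sqrt 2"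
  proof -
    have e: "real (Suc m) / 2 = real m / 2 + 1/2" by simp
    have "(2::real) powr (real (Suc m) / 2) = 2 powr (real m / 2 + 1/2)" unfolding e ..
    also have "\<dots> = 2 powr (real m / 2) * 2 powr (1/2)" by (rule powr_add)
    finally show ?thesis by (simp add: powr_half_sqrt)
  qed
  have s: "sqrt 2 * sqrt 2 = (2::real)" by simp
  have f: "fact (Suc m) = (real m + 1) * (fact m :: real)" by (simp add: algebra_simps)
  have r: "lam / sqrt 2 = lam * sqrt 2 / 2"
  proof -
    have "lam * sqrt 2 / 2 = lam * sqrt 2 / (sqrt 2 * sqrt 2)" by (simp only: s)
    also have "\<dots> = (lam / sqrt 2) * (sqrt 2 / sqrt 2)" by (rule times_divide_times_eq[symmetric])
    also have "\<dots> = lam / sqrt 2" by simp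
    finally show ?thesis ..
  qed
  have F: "(fact m :: real) > 0" by simp
  have m1: "real m + 1 > 0" by simp
  show ?thesis unfolding cc_def p f r power_Suc
    by (rule sym, rule alg1) (use F m1 in auto)
qed

lemma series_T:
  fixes lam q :: real
  assumes lam: "lam > 0" and q: "q > -1/2"
  defines "I1 \<equiv> (LINT t:{0<..}|lborel. t powr (q+1-1) * exp (-t) * exp (-(lam * sqrt (2*t))))"
      and "I2 \<equiv> (LINT t:{0<..}|lborel. t powr (q+1/2-1) * exp (-t) * exp (-(lam * sqrt (2*t))))"
  shows "(\<lambda>k. if k = 0 then Gamma (q+1) else q * (Gamma (q + real k / 2) * cc lam k)) sums (I1 + lam / sqrt 2 * I2)"
proof -
  have q1: "q + 1 > 0" and q2: "q + 1/2 > 0" using q by simp_all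
  have A: "(\<lambda>j. Gamma (q + 1 + real j / 2) * cc lam j) sums I1"
    using series_int[OF less_imp_le[OF lam] q1] unfolding I1_def cc_def by simp
  have B: "(\<lambda>j. Gamma (q + 1/2 + real j / 2) * cc lam j) sums I2"
    using series_int[OF less_imp_le[OF lam] q2] unfolding I2_def cc_def by simp
  define b' where "b' = (\<lambda>k. if k = 0 then 0 else lam / sqrt 2 * (Gamma (q + 1/2 + real (k - 1) / 2) * cc lam (k - 1)))"
  have "(\<lambda>n. b' (Suc n)) sums (lam / sqrt 2 * I2)"
    unfolding b'_def using sums_mult[OF B, of "lam / sqrt 2"] by simp
  then have "b' sums (lam / sqrt 2 * I2 + b' 0)" by (simp only: sums_Suc_iff)
  moreover have "b' 0 = 0" by (simp add: b'_def)
  ultimately have B': "b' sums (lam / sqrt 2 * I2)" by simp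
  have S: "(\<lambda>k. Gamma (q + 1 + real k / 2) * cc lam k + b' k) sums (I1 + lam / sqrt 2 * I2)"
    by (rule sums_add[OF A B'])
  have eq: "Gamma (q + 1 + real k / 2) * cc lam k + b' k = (if k = 0 then Gamma (q+1) else q * (Gamma (q + real k / 2) * cc lam k))" for k
  proof (cases k)
    case 0
    then show ?thesis by (simp add: b'_def cc_def)
  next
    case (Suc m)
    define z where "z = q + real k / 2"
    have "real m / 2 \<ge> 0" by simp
    then have z: "z > 0" using q by (simp add: z_def Suc add_divide_distrib)
    have g1: "Gamma (q + 1 + real k / 2) = z * Gamma z"
    proof -
      have e: "q + 1 + real k / 2 = z + 1" by (simp add: z_def)
      have "Gamma (q + 1 + real k / 2) = Gamma (z + 1)" by (simp only: e)
      also have "\<dots> = z * Gamma z" by (rule Gamma_plus1[OF not_npi]) (use z in auto)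
      finally show ?thesis .
    qed
    have g2: "q + 1/2 + real (k - 1) / 2 = z" by (simp add: z_def Suc field_simps)
    have km: "k - 1 = m" using Suc by simp
    have "b' k = lam / sqrt 2 * (Gamma (q + 1/2 + real (k - 1) / 2) * cc lam (k - 1))" using Suc by (simp add: b'_def)
    also have "\<dots> = lam / sqrt 2 * (Gamma z * cc lam m)" by (simp only: g2, simp only: km)
    also have "\<dots> = Gamma z * (lam / sqrt 2 * cc lam m)" by (simp add: ac_simps)
    also have "\<dots> = Gamma z * (-((real m + 1)/2) * cc lam k)" by (simp only: cc_shift Suc)
    finally have "b' k = Gamma z * (-((real m + 1)/2) * cc lam k)" .
    then have "Gamma (q + 1 + real k / 2) * cc lam k + b' k = (z - (real m + 1)/2) * Gamma z * cc lam k"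
      unfolding g1 by (simp add: algebra_simps)
    also have "z - (real m + 1)/2 = q" by (simp add: z_def Suc field_simps)
    finally show ?thesis using Suc by (simp add: z_def)
  qed
  show ?thesis using S unfolding eq .
qed

lemma alg2:
  fixes A B C P s q T :: real
  assumes d: "A * B = 2 / (P * P) * s * C" and nz: "A \<noteq> 0" "B \<noteq> 0" "C \<noteq> 0" "P \<noteq> 0" "s \<noteq> 0" "q \<noteq> 0"
  shows "P * B / s * (1 / (2 * C) * (P * (T / q))) = T / (q * A)"
proof -
  have C: "C = A * B * P * P / (2 * s)" using d nz by (simp add: field_simps)
  show ?thesis unfolding C using nz by (simp add: field_simps)
qed

theorem lemma8p2:
  fixes lam q :: real
  assumes "lam > 0" and "q > - 1/2"
  shows "set_integrable lborel {0<..<1} (\<lambda>p. p powr q * P1_density lam p)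
    \<and> integrable lborel (\<lambda>x. (x^2 / (lam^2 + x^2)) powr q * std_normal_density x)
    \<and> integrable lborel (\<lambda>x. \<bar>x\<bar> powr (2 * q) * std_normal_density x)
    \<and> mu_moment q lam =
        (LINT x|lborel. (x^2 / (lam^2 + x^2)) powr q * std_normal_density x)
    \<and> (LINT x|lborel. (x^2 / (lam^2 + x^2)) powr q * std_normal_density x) =
        (LINT x|lborel. \<bar>x\<bar> powr (2 * q) * std_normal_density x) * hermite_fun (- 2 * q) lam
    \<and> (LINT x|lborel. \<bar>x\<bar> powr (2 * q) * std_normal_density x) =
        2 powr q * Gamma (q + 1/2) / Gamma (1/2)
    \<and> (q > 0 \<longrightarrow>
        mu_moment q lam =
          (LINT t:{0<..}|lborel. exp (- lam * sqrt (2 * t)) * (t powr (q - 1) * exp (- t) / Gamma q)))"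
proof -
  have lam: "lam > 0" and q: "q > -1/2" using assms by auto
  define I1 where "I1 = (LINT t:{0<..}|lborel. t powr (q+1-1) * exp (-t) * exp (-(lam * sqrt (2*t))))"
  define I2 where "I2 = (LINT t:{0<..}|lborel. t powr (q+1/2-1) * exp (-t) * exp (-(lam * sqrt (2*t))))"
  define T where "T = I1 + lam / sqrt 2 * I2"
  have q1: "q + 1 > 0" and q2: "q + 1/2 > 0" using q by simp_all
  have G1: "Gamma (q+1) > 0" using q1 by (rule Gamma_real_pos)
  have I1nn: "I1 \<ge> 0" unfolding I1_def set_lebesgue_integral_def by (intro integral_nonneg_AE AE_I2) (auto simp: indicator_def)
  have I2nn: "I2 \<ge> 0" unfolding I2_def set_lebesgue_integral_def by (intro integral_nonneg_AE AE_I2) (auto simp: indicator_def)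
  have Tnn: "T \<ge> 0" unfolding T_def using I1nn I2nn lam by simp
  have GF: "(\<integral>\<^sup>+x. ennreal ((x\<^sup>2/(lam\<^sup>2+x\<^sup>2)) powr q * std_normal_density x) \<partial>lborel) = ennreal (T / Gamma (q+1))"
    using G_formula[OF lam q] unfolding T_def I1_def I2_def .
  have Fm: "(\<lambda>x. (x\<^sup>2/(lam\<^sup>2+x\<^sup>2)) powr q * std_normal_density x) \<in> borel_measurable lborel" by measurable
  have intF: "integrable lborel (\<lambda>x. (x\<^sup>2/(lam\<^sup>2+x\<^sup>2)) powr q * std_normal_density x)
      \<and> (LINT x|lborel. (x\<^sup>2/(lam\<^sup>2+x\<^sup>2)) powr q * std_normal_density x) = T / Gamma (q+1)"
    using nn_integral_eq_integrable[OF Fm _, of "T / Gamma (q+1)"] GF Tnn G1 by simp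
  have Pm: "(\<lambda>p. p powr q * P1_density lam p) \<in> borel_measurable borel" unfolding P1_density_def by measurable
  have mu: "set_integrable lborel {0<..<1} (\<lambda>p. p powr q * P1_density lam p) \<and> mu_moment q lam = T / Gamma (q+1)"
  proof -
    have "set_integrable lborel {0<..<1} (\<lambda>p. p powr q * P1_density lam p) \<and>
        (LINT p:{0<..<1}|lborel. p powr q * P1_density lam p) = T / Gamma (q+1)"
      by (rule set_nn_to_int[OF Pm]) (use lam Tnn G1 mu_nn[OF lam, of q] GF in \<open>auto simp: P1_density_def\<close>)
    then show ?thesis by (simp add: mu_moment_def)
  qed
  have Em: "(\<lambda>x. \<bar>x\<bar> powr (2*q) * std_normal_density x) \<in> borel_measurable lborel" by measurable
  have G12: "Gamma (q + 1/2) > 0" using q2 by (rule Gamma_real_pos)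
  have intE: "integrable lborel (\<lambda>x. \<bar>x\<bar> powr (2*q) * std_normal_density x)
      \<and> (LINT x|lborel. \<bar>x\<bar> powr (2*q) * std_normal_density x) = 2 powr q * Gamma (q + 1/2) / sqrt pi"
    using nn_integral_eq_integrable[OF Em _, of "2 powr q * Gamma (q + 1/2) / sqrt pi"] abs_moment_nn[OF q] G12
    by simp
  have ST: "(\<lambda>k. if k = 0 then Gamma (q+1) else q * (Gamma (q + real k / 2) * cc lam k)) sums T"
    using series_T[OF lam q] unfolding T_def I1_def I2_def .
  have herm: "(LINT x|lborel. (x\<^sup>2/(lam\<^sup>2+x\<^sup>2)) powr q * std_normal_density x) =
        (LINT x|lborel. \<bar>x\<bar> powr (2 * q) * std_normal_density x) * hermite_fun (- 2 * q) lam"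
  proof (cases "q = 0")
    case True
    have "(\<lambda>k. if k = 0 then Gamma (q+1) else q * (Gamma (q + real k / 2) * cc lam k)) = (\<lambda>k. if k = 0 then 1 else 0)"
      using True by (auto simp: fun_eq_iff)
    then have "(\<lambda>k::nat. if k = 0 then (1::real) else 0) sums T" using ST by simp
    moreover have "(\<lambda>k::nat. if k = 0 then (1::real) else 0) sums 1" using sums_single[of 0 "\<lambda>_. 1::real"] by simp
    ultimately have "T = 1" by (simp add: sums_iff)
    then show ?thesis using intF intE True by (simp add: hermite_fun_def Gamma_one_half_real)
  next
    case False
    define e where "e = (\<lambda>k::nat. Gamma (q + real k / 2) * cc lam k)"
    have qn: "q \<notin> \<int>\<^sub>\<le>\<^sub>0" using not_npi[of q] q False by simp
    have "(\<lambda>k. if k = 0 then Gamma (q+1) else q * (Gamma (q + real k / 2) * cc lam k)) = (\<lambda>k. q * e k)"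
      using Gamma_plus1[OF qn] by (auto simp: fun_eq_iff e_def cc_def)
    then have "(\<lambda>k. q * e k) sums T" using ST by simp
    then have "(\<lambda>k. 1/q * (q * e k)) sums (1/q * T)" by (rule sums_mult)
    then have es: "e sums (T / q)" using False by simp
    have h: "hermite_fun (- 2 * q) lam = 1 / (2 * Gamma (2 * q)) * (2 powr q * (T / q))"
    proof -
      have "(\<lambda>j. Gamma (q + real j / 2) * 2 powr (q + real j / 2) * (- lam) ^ j / fact j) = (\<lambda>j. 2 powr q * e j)"
        by (auto simp: fun_eq_iff e_def cc_def powr_add)
      moreover have "(\<lambda>j. 2 powr q * e j) sums (2 powr q * (T / q))" by (rule sums_mult[OF es])
      ultimately have "(\<Sum>j. Gamma (q + real j / 2) * 2 powr (q + real j / 2) * (- lam) ^ j / fact j) = 2 powr q * (T / q)"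
        by (simp add: sums_iff)
      then show ?thesis using False by (simp add: hermite_fun_def Let_def)
    qed
    have dup: "Gamma q * Gamma (q + 1/2) = 2 / (2 powr q * 2 powr q) * sqrt pi * Gamma (2*q)"
    proof -
      have "2 powr (1 - 2*q) = 2 powr 1 / 2 powr (2*q)" by (rule powr_diff)
      also have "2 powr (2*q) = 2 powr q * (2::real) powr q" by (simp add: powr_add[symmetric])
      finally have "2 powr (1 - 2*q) = 2 / (2 powr q * (2::real) powr q)" by simp
      then show ?thesis using dup_real[OF q False] by simp
    qed
    have nz: "Gamma q \<noteq> 0" "Gamma (q + 1/2) \<noteq> 0" "Gamma (2*q) \<noteq> 0" "(2::real) powr q \<noteq> 0" "sqrt pi \<noteq> 0" "q \<noteq> 0"
    proof -
      show "Gamma q \<noteq> 0" by (rule Gamma_nonzero[OF qn])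
      show "Gamma (q + 1/2) \<noteq> 0" using G12 by linarith
      show "Gamma (2*q) \<noteq> 0" by (rule Gamma_nonzero[OF not_npi]) (use q False in auto)
      show "(2::real) powr q \<noteq> 0" by simp
      show "sqrt pi \<noteq> 0" by simp
      show "q \<noteq> 0" by (rule False)
    qed
    have "2 powr q * Gamma (q + 1/2) / sqrt pi * (1 / (2 * Gamma (2 * q)) * (2 powr q * (T / q))) = T / (q * Gamma q)"
      by (rule alg2[OF dup nz])
    moreover have "Gamma (q+1) = q * Gamma q" using Gamma_plus1[OF qn] .
    ultimately show ?thesis using intF intE h by simp
  qed
  have partD: "q > 0 \<longrightarrow> mu_moment q lam =
          (LINT t:{0<..}|lborel. exp (- lam * sqrt (2 * t)) * (t powr (q - 1) * exp (- t) / Gamma q))"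
  proof
    assume qp: "q > 0"
    have qn: "q \<notin> \<int>\<^sub>\<le>\<^sub>0" using not_npi[of q] qp by simp
    define e where "e = (\<lambda>k::nat. Gamma (q + real k / 2) * cc lam k)"
    have "(\<lambda>k. if k = 0 then Gamma (q+1) else q * (Gamma (q + real k / 2) * cc lam k)) = (\<lambda>k. q * e k)"
      using Gamma_plus1[OF qn] by (auto simp: fun_eq_iff e_def cc_def)
    then have "(\<lambda>k. q * e k) sums T" using ST by simp
    then have "(\<lambda>k. 1/q * (q * e k)) sums (1/q * T)" by (rule sums_mult)
    then have es: "e sums (T / q)" using qp by simp
    define Iq where "Iq = (LINT t:{0<..}|lborel. t powr (q-1) * exp (-t) * exp (-(lam * sqrt (2*t))))"
    have "e sums Iq" using series_int[OF less_imp_le[OF lam] qp] unfolding e_def cc_def Iq_def by simp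
    then have TIq: "T / q = Iq" using es by (simp add: sums_iff)
    have "(LINT t:{0<..}|lborel. exp (- lam * sqrt (2 * t)) * (t powr (q - 1) * exp (- t) / Gamma q)) = Iq / Gamma q"
    proof -
      have "(\<lambda>t. indicator {0<..} t *\<^sub>R (exp (- lam * sqrt (2 * t)) * (t powr (q - 1) * exp (- t) / Gamma q)))
          = (\<lambda>t. (indicator {0<..} t *\<^sub>R (t powr (q-1) * exp (-t) * exp (-(lam * sqrt (2*t))))) / Gamma q)"
        by (auto simp: fun_eq_iff indicator_def)
      then show ?thesis unfolding Iq_def set_lebesgue_integral_def by simp
    qed
    moreover have "mu_moment q lam = Iq / Gamma q"
      using mu Gamma_plus1[OF qn] TIq qp by (simp add: field_simps)
    ultimately show "mu_moment q lam =
          (LINT t:{0<..}|lborel. exp (- lam * sqrt (2 * t)) * (t powr (q - 1) * exp (- t) / Gamma q))" by (simp only:)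
  qed
  show ?thesis
    using mu intF intE herm partD by (simp add: Gamma_one_half_real)
qed


end
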